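(* In the setting of the context, let $U>0$, $H=H_{\mathrm{hop}}+H_{\mathrm{int}}$ with $H_{\mathrm{int}}=U\sum_{v\in\mathcal{V}_L}n_{v,\uparrow}n_{v,\downarrow}$, and let the electron number be $N_e=|\mathcal{V}_L|-L$. Then the ferromagnetic state $\Phi_\uparrow=\big(\prod_{v\in\mathcal{V}_L^W}a^\dagger_{v,\uparrow}\big)\Phi_0$, in which every single-electron ground state of $H_{\mathrm{hop}}$ is occupied by one $\uparrow$-spin electron (total $S^{(3)}$ eigenvalue $N_e/2$), is a ground state of $H$, with energy $0$.
   Context: Construction. Let $G_l=(V_l,E_l)$, $l=1,\dots,L$, be complete graphs with $|V_l|\ge 2$. In each $V_l$ one vertex $v_l^0$ is painted black, the others white. Set $\mathcal{G}_1=G_1$. For $l=2,\dots,L$: choose an integer $z_l$ with $0<z_l\le |V_l|-1$, choose $z_l$ white vertices of $V_l$ and identify each with a vertex (black or white; distinct with distinct) of $\mathcal{V}_{l-1}$; $\mathcal{V}_l=\mathcal{V}_{l-1}\cup V_l$ with these identifications and $\mathcal{E}_l=\mathcal{E}_{l-1}\cup E_l$ (edges joining the same two vertices merged). A white vertex identified with a black one becomes black; two identified white vertices stay white; $v_l^0$ is never identified with an earlier vertex. The black vertices of $\mathcal{G}_L$ are exactly $v_1^0,\dots,v_L^0$; $\mathcal{V}_L^W$ is the set of white vertices; $V_l$ is regarded as a subset of $\mathcal{V}_L$. Weights: $w(v)=\#\{l: v\in V_l\}$, $w(e)=\#\{l: e\in E_l\}$. Directed edges $\vec{\mathcal{E}}_L=\bigcup_l\{(v,v_l^0):v\in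 V_l\setminus\{v_l^0\}\}$; directed paths, reachable set $R(v)$ (containing $v$ via the trivial path), and number $N(v\to u)$ of directed paths from $v$ to $u$ defined as usual; $|(v\to u)_j|$ is the number of vertices on the $j$-th path. Fermions $c_{v,\sigma}$ on $\mathcal{V}_L$ with canonical anticommutation relations, vacuum $\Phi_0$, $n_{v,\sigma}=c^\dagger_{v,\sigma}c_{v,\sigma}$. $H_{\mathrm{hop}}=\sum_{v,v'}\sum_\sigma t_{v,v'}c^\dagger_{v,\sigma}c_{v',\sigma}$ with $t_{v,v'}=w(e)t$ for $e=\{v,v'\}\in\mathcal{E}_L$, $t_{v,v}=w(v)t$, $0$ otherwise, $t>0$. For white $v$, $a_{v,\sigma}=\sum_{u\in R(v)}\big(\sum_{j=1}^{N(v\to u)}(-1)^{|(v\to u)_j|-1}\big)c_{u,\sigma}$. *)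

theory Defs
  imports Complex_Main "HOL-Library.Product_Lexorder"
begin

section \<open>Fermionic Fock space on modes (vertex, spin); spin True = up, False = down\<close>

text \<open>A Fock vector is given by its coefficients in the occupation-number basis
  |S> = c^dag_{m1} ... c^dag_{mk} Phi_0 with m1 < ... < mk (lexicographic order on modes).\<close>

type_synonym 'v fock = "('v \<times> bool) set \<Rightarrow> complex"

definition ann :: "'v::linorder \<times> bool \<Rightarrow> 'v fock \<Rightarrow> 'v fock" where
  "ann m \<Psi> = (\<lambda>S. if m \<notin> S then (-1) ^ card {k\<in>S. k < m} * \<Psi> (insert m S) else 0)"

definition cre :: "'v::linorder \<times> bool \<Rightarrow> 'v fock \<Rightarrow> 'v fock" where
  "cre m \<Psi> = (\<lambda>S. if m \<in> S then (-1) ^ card {k\<in>S. k < m} * \<Psi> (S - {m}) else 0)"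

definition num :: "'v::linorder \<times> bool \<Rightarrow> 'v fock \<Rightarrow> 'v fock" where
  "num m \<Psi> = cre m (ann m \<Psi>)"

definition vac :: "'v fock" where
  "vac = (\<lambda>S. if S = {} then 1 else 0)"

text \<open>V l (l = 1..L) is the image of the vertex set of G_l in the final vertex set,
  b l is the black vertex v_l^0.\<close>

definition graph_construction :: "nat \<Rightarrow> (nat \<Rightarrow> 'v set) \<Rightarrow> (nat \<Rightarrow> 'v) \<Rightarrow> bool" where
  "graph_construction L V b \<longleftrightarrow> 1 \<le> L \<and>
     (\<forall>l\<in>{1..L}. finite (V l) \<and> 2 \<le> card (V l) \<and> b l \<in> V l \<and>
        (\<forall>k\<in>{1..<l}. b l \<notin> V k) \<and>
        (2 \<le> l \<longrightarrow> V l \<inter> (\<Union>k\<in>{1..<l}. V k) \<noteq> {}))"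

definition allV :: "nat \<Rightarrow> (nat \<Rightarrow> 'v set) \<Rightarrow> 'v set" where
  "allV L V = (\<Union>l\<in>{1..L}. V l)"

definition white :: "nat \<Rightarrow> (nat \<Rightarrow> 'v set) \<Rightarrow> (nat \<Rightarrow> 'v) \<Rightarrow> 'v set" where
  "white L V b = allV L V - b ` {1..L}"

definition vweight :: "nat \<Rightarrow> (nat \<Rightarrow> 'v set) \<Rightarrow> 'v \<Rightarrow> nat" where
  "vweight L V v = card {l\<in>{1..L}. v \<in> V l}"

definition eweight :: "nat \<Rightarrow> (nat \<Rightarrow> 'v set) \<Rightarrow> 'v set \<Rightarrow> nat" where
  "eweight L V e = card {l\<in>{1..L}. e \<subseteq> V l}"

definition is_edge :: "nat \<Rightarrow> (nat \<Rightarrow> 'v set) \<Rightarrow> 'v \<Rightarrow> 'v \<Rightarrow> bool" where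
  "is_edge L V v v' \<longleftrightarrow> v \<noteq> v' \<and> (\<exists>l\<in>{1..L}. {v, v'} \<subseteq> V l)"

definition hop :: "nat \<Rightarrow> (nat \<Rightarrow> 'v set) \<Rightarrow> real \<Rightarrow> 'v \<Rightarrow> 'v \<Rightarrow> real" where
  "hop L V t v v' =
     (if v = v' then real (vweight L V v) * t
      else if is_edge L V v v' then real (eweight L V {v, v'}) * t else 0)"

definition dedges :: "nat \<Rightarrow> (nat \<Rightarrow> 'v set) \<Rightarrow> (nat \<Rightarrow> 'v) \<Rightarrow> ('v \<times> 'v) set" where
  "dedges L V b = {(v, b l) | v l. l \<in> {1..L} \<and> v \<in> V l - {b l}}"

text \<open>Directed paths from v to u, as lists of vertices (trivial path [v] included).\<close>
definition dpaths :: "('v \<times> 'v) set \<Rightarrow> 'v \<Rightarrow> 'v \<Rightarrow> 'v list set" where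
  "dpaths E v u = {xs. xs \<noteq> [] \<and> hd xs = v \<and> last xs = u \<and>
       (\<forall>i. Suc i < length xs \<longrightarrow> (xs ! i, xs ! Suc i) \<in> E)}"

definition reach :: "('v \<times> 'v) set \<Rightarrow> 'v \<Rightarrow> 'v set" where
  "reach E v = {u. dpaths E v u \<noteq> {}}"

definition acoef :: "('v \<times> 'v) set \<Rightarrow> 'v \<Rightarrow> 'v \<Rightarrow> int" where
  "acoef E v u = (\<Sum>xs\<in>dpaths E v u. (-1) ^ (length xs - 1))"

definition adag :: "nat \<Rightarrow> (nat \<Rightarrow> 'v::linorder set) \<Rightarrow> (nat \<Rightarrow> 'v) \<Rightarrow> 'v \<Rightarrow> bool \<Rightarrow> 'v fock \<Rightarrow> 'v fock" where
  "adag L V b v \<sigma> \<Psi> = (\<lambda>S. \<Sum>u\<in>reach (dedges L V b) v.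
       cnj (of_int (acoef (dedges L V b) v u)) * cre (u, \<sigma>) \<Psi> S)"

definition Phi_up :: "nat \<Rightarrow> (nat \<Rightarrow> 'v::linorder set) \<Rightarrow> (nat \<Rightarrow> 'v) \<Rightarrow> 'v fock" where
  "Phi_up L V b = foldr (\<lambda>v \<Psi>. adag L V b v True \<Psi>) (sorted_list_of_set (white L V b)) vac"

definition H_hop :: "nat \<Rightarrow> (nat \<Rightarrow> 'v::linorder set) \<Rightarrow> real \<Rightarrow> 'v fock \<Rightarrow> 'v fock" where
  "H_hop L V t \<Psi> = (\<lambda>S. \<Sum>v\<in>allV L V. \<Sum>v'\<in>allV L V. \<Sum>\<sigma>\<in>UNIV.
       of_real (hop L V t v v') * cre (v, \<sigma>) (ann (v', \<sigma>) \<Psi>) S)"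

definition H_int :: "nat \<Rightarrow> (nat \<Rightarrow> 'v::linorder set) \<Rightarrow> real \<Rightarrow> 'v fock \<Rightarrow> 'v fock" where
  "H_int L V U \<Psi> = (\<lambda>S. \<Sum>v\<in>allV L V. of_real U * num (v, True) (num (v, False) \<Psi>) S)"

definition Ham :: "nat \<Rightarrow> (nat \<Rightarrow> 'v::linorder set) \<Rightarrow> real \<Rightarrow> real \<Rightarrow> 'v fock \<Rightarrow> 'v fock" where
  "Ham L V t U \<Psi> = (\<lambda>S. H_hop L V t \<Psi> S + H_int L V U \<Psi> S)"

definition in_sector :: "nat \<Rightarrow> (nat \<Rightarrow> 'v set) \<Rightarrow> nat \<Rightarrow> 'v fock \<Rightarrow> bool" where
  "in_sector L V N \<Psi> \<longleftrightarrow> (\<forall>S. \<Psi> S \<noteq> 0 \<longrightarrow> S \<subseteq> allV L V \<times> UNIV \<and> card S = N)"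

end

theory Submission imports Defs begin

definition cnt :: "('a::linorder) set \<Rightarrow> 'a \<Rightarrow> nat" where "cnt S m = card {k\<in>S. k < m}"

lemma ann_alt: "ann m \<Psi> S = (if m \<notin> S then (-1) ^ cnt S m * \<Psi> (insert m S) else 0)"
  by (simp add: ann_def cnt_def)
lemma cre_alt: "cre m \<Psi> S = (if m \<in> S then (-1) ^ cnt S m * \<Psi> (S - {m}) else 0)"
  by (simp add: cre_def cnt_def)

lemma anticomm_ne:
  assumes "finite S" "m \<noteq> m'"
  shows "ann m (cre m' \<Psi>) S = - cre m' (ann m \<Psi>) S"
proof (cases "m \<notin> S \<and> m' \<in> S")
  case False
  then show ?thesis using assms(2) by (auto simp: ann_alt cre_alt)
next
  case T: True
  have e1: "insert m S - {m'} = insert m (S - {m'})" using assms(2) by auto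
  have m1: "m' \<in> insert m S" "m \<notin> S - {m'}" using T by auto
  show ?thesis
  proof (cases "m < m'")
    case True
    have "{k\<in>insert m S. k < m'} = insert m {k\<in>S. k<m'}" using True by auto
    then have a: "cnt (insert m S) m' = Suc (cnt S m')"
      using T assms(1) by (simp add: cnt_def)
    have "{k\<in>S-{m'}. k<m} = {k\<in>S. k<m}" using True by auto
    then have b: "cnt (S-{m'}) m = cnt S m" by (simp add: cnt_def)
    show ?thesis using T m1 by (simp add: ann_alt cre_alt a b e1)
  next
    case False
    then have lt: "m' < m" using assms(2) by auto
    have "{k\<in>insert m S. k < m'} = {k\<in>S. k<m'}" using lt by auto
    then have a: "cnt (insert m S) m' = cnt S m'" by (simp add: cnt_def)
    have "{k\<in>S. k<m} = insert m' {k\<in>S-{m'}. k<m}" using lt T by auto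
    then have b: "cnt S m = Suc (cnt (S-{m'}) m)" using assms(1) by (simp add: cnt_def)
    show ?thesis using T m1 by (simp add: ann_alt cre_alt a b e1)
  qed
qed

lemma cnt_remove: "cnt (S - {m}) m = cnt S m" "cnt (insert m S) m = cnt S m"
  unfolding cnt_def by (rule arg_cong[where f=card], auto)+

lemma anticomm_eq:
  shows "ann m (cre m \<Psi>) S + cre m (ann m \<Psi>) S = \<Psi> S"
proof (cases "m \<in> S")
  case True
  have "insert m (S - {m}) = S" using True by auto
  then show ?thesis using True by (simp add: ann_alt cre_alt cnt_remove flip: power_add)
next
  case False
  then show ?thesis by (simp add: ann_alt cre_alt cnt_remove flip: power_add)
qed

lemma num_eq: "num m \<Psi> S = (if m \<in> S then \<Psi> S else 0)"
proof (cases "m \<in> S")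
  case True
  have "insert m (S - {m}) = S" using True by auto
  then show ?thesis using True by (simp add: num_def ann_alt cre_alt cnt_remove flip: power_add)
qed (simp add: num_def cre_alt)

lemma cre_sum: "cre m (\<lambda>S. \<Sum>i\<in>I. f i S) S = (\<Sum>i\<in>I. cre m (f i) S)"
  by (simp add: cre_def sum_distrib_left)
lemma ann_sum: "ann m (\<lambda>S. \<Sum>i\<in>I. f i S) S = (\<Sum>i\<in>I. ann m (f i) S)"
  by (simp add: ann_def sum_distrib_left)
lemma cre_scale: "cre m (\<lambda>S. c * f S) S = c * cre m f S"
  by (simp add: cre_def)
lemma ann_scale: "ann m (\<lambda>S. c * f S) S = c * ann m f S"
  by (simp add: ann_def)
lemma cre_zero: "cre m (\<lambda>_. 0) = (\<lambda>_. 0)"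
  by (simp add: cre_def fun_eq_iff)

lemma adjoint:
  assumes "finite M" "m \<in> M"
  shows "(\<Sum>S\<in>Pow M. cnj (\<Psi> S) * cre m \<Phi> S) = (\<Sum>S\<in>Pow M. cnj (ann m \<Psi> S) * \<Phi> S)"
proof -
  have "(\<Sum>S\<in>Pow M. cnj (\<Psi> S) * cre m \<Phi> S) =
     (\<Sum>S\<in>{S\<in>Pow M. m \<in> S}. cnj (\<Psi> S) * (-1) ^ cnt S m * \<Phi> (S - {m}))"
    by (subst sum.inter_filter, simp add: assms(1), rule sum.cong, auto simp: cre_alt)
  also have "\<dots> = (\<Sum>T\<in>{T\<in>Pow M. m \<notin> T}. cnj (\<Psi> (insert m T)) * (-1) ^ cnt T m * \<Phi> T)"
    apply (rule sum.reindex_bij_witness[where i="insert m" and j="\<lambda>S. S-{m}"])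
    using assms by (auto simp: cnt_remove insert_absorb)
  also have "\<dots> = (\<Sum>S\<in>Pow M. cnj (ann m \<Psi> S) * \<Phi> S)"
    by (subst sum.inter_filter, simp add: assms(1), rule sum.cong, auto simp: ann_alt)
  finally show ?thesis .
qed


lemma cnj_sq: "cnj z * z = complex_of_real ((cmod z)^2)"
  by (subst complex_norm_square) (rule mult.commute)

locale gc =
  fixes L :: nat and V :: "nat \<Rightarrow> 'v::linorder set" and b :: "nat \<Rightarrow> 'v"
  assumes gc: "graph_construction L V b"
begin

abbreviation "E \<equiv> dedges L V b"
abbreviation "A \<equiv> allV L V"
abbreviation "Bl \<equiv> b ` {1..L}"

lemma finV: "l \<in> {1..L} \<Longrightarrow> finite (V l)"
  and bV: "l \<in> {1..L} \<Longrightarrow> b l \<in> V l"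
  and notprev: "l \<in> {1..L} \<Longrightarrow> k \<in> {1..<l} \<Longrightarrow> b l \<notin> V k"
  and L1: "1 \<le> L"
  using gc unfolding graph_construction_def by auto

lemma finA: "finite A"
  unfolding allV_def using finV by auto

lemma VA: "l \<in> {1..L} \<Longrightarrow> V l \<subseteq> A"
  unfolding allV_def by auto

lemma b_later: "j \<in> {1..L} \<Longrightarrow> l \<in> {1..L} \<Longrightarrow> b j \<in> V l \<Longrightarrow> j \<le> l"
  using notprev[of j l] by force

lemma b_inj: "inj_on b {1..L}"
proof (rule inj_onI)
  fix x y assume xy: "x \<in> {1..L}" "y \<in> {1..L}" "b x = b y"
  have "b x \<in> V y" using bV[OF xy(2)] xy(3) by simp
  moreover have "b y \<in> V x" using bV[OF xy(1)] xy(3) by simp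
  ultimately show "x = y" using b_later[of x y] b_later[of y x] xy by simp
qed

lemma BlA: "Bl \<subseteq> A" using bV VA by blast

lemma edgeD: "(x, y) \<in> E \<Longrightarrow> \<exists>l\<in>{1..L}. y = b l \<and> x \<in> V l \<and> x \<noteq> b l"
  unfolding dedges_def by auto

lemma edge_iff: "l \<in> {1..L} \<Longrightarrow> (x, b l) \<in> E \<longleftrightarrow> x \<in> V l \<and> x \<noteq> b l"
proof
  assume l: "l \<in> {1..L}" and "(x, b l) \<in> E"
  then obtain l' where "l' \<in> {1..L}" "b l = b l'" "x \<in> V l'" "x \<noteq> b l'" using edgeD by blast
  then show "x \<in> V l \<and> x \<noteq> b l" using b_inj l by (metis inj_onD)
next
  assume "l \<in> {1..L}" "x \<in> V l \<and> x \<noteq> b l"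
  then show "(x, b l) \<in> E" unfolding dedges_def by auto
qed

lemma path_idx:
  assumes xs: "xs \<in> dpaths E w u"
  shows "0 < i \<Longrightarrow> i < length xs \<Longrightarrow> \<exists>j\<in>{1..L}. xs ! i = b j \<and> i \<le> j"
proof (induction i)
  case 0 then show ?case by simp
next
  case (Suc i)
  have "(xs ! i, xs ! Suc i) \<in> E" using xs Suc.prems unfolding dpaths_def by auto
  then obtain l where l: "l \<in> {1..L}" "xs ! Suc i = b l" "xs ! i \<in> V l" "xs ! i \<noteq> b l"
    using edgeD by blast
  show ?case
  proof (cases "i = 0")
    case True then show ?thesis using l by auto
  next
    case False
    then obtain j where j: "j \<in> {1..L}" "xs ! i = b j" "i \<le> j" using Suc by auto
    have "j \<le> l" using b_later[of j l] j l by auto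
    moreover have "j \<noteq> l" using j l by auto
    ultimately show ?thesis using l j by auto
  qed
qed

lemma path_set: "xs \<in> dpaths E w u \<Longrightarrow> set xs \<subseteq> insert w A \<and> length xs \<le> Suc L"
proof -
  assume xs: "xs \<in> dpaths E w u"
  have ne: "xs \<noteq> []" "hd xs = w" using xs unfolding dpaths_def by auto
  have "set xs \<subseteq> insert w A"
  proof
    fix x assume "x \<in> set xs"
    then obtain i where i: "i < length xs" "x = xs ! i" by (metis in_set_conv_nth)
    show "x \<in> insert w A"
    proof (cases "i = 0")
      case True then show ?thesis using i ne by (simp add: hd_conv_nth)
    next
      case False
      then obtain j where "j \<in> {1..L}" "xs ! i = b j" using path_idx[OF xs, of i] i False by blast
      then show ?thesis using i BlA by (metis image_subset_iff insertI2)
    qed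
  qed
  moreover have "length xs \<le> Suc L"
  proof (cases "length xs \<le> 1")
    case False
    then have "0 < length xs - 1" "length xs - 1 < length xs" by auto
    then obtain j where "j \<in> {1..L}" "length xs - 1 \<le> j" using path_idx[OF xs, of "length xs - 1"] by blast
    then show ?thesis by auto
  qed (use L1 in auto)
  ultimately show ?thesis by blast
qed

lemma fin_dpaths: "finite (dpaths E w u)"
proof -
  have "dpaths E w u \<subseteq> {xs. set xs \<subseteq> insert w A \<and> length xs \<le> Suc L}"
    using path_set by blast
  moreover have "finite {xs. set xs \<subseteq> insert w A \<and> length xs \<le> Suc L}"
    using finA by (intro finite_lists_length_le) auto
  ultimately show ?thesis by (rule finite_subset)
qed

lemma path_last_black: "xs \<in> dpaths E w u \<Longrightarrow> 2 \<le> length xs \<Longrightarrow> u \<in> Bl"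
proof -
  assume xs: "xs \<in> dpaths E w u" "2 \<le> length xs"
  have "0 < length xs - 1" "length xs - 1 < length xs" using xs(2) by auto
  then obtain j where "j \<in> {1..L}" "xs ! (length xs - 1) = b j" using path_idx[OF xs(1), of "length xs - 1"] by blast
  moreover have "xs \<noteq> []" "last xs = u" using xs unfolding dpaths_def by auto
  then have "u = xs ! (length xs - 1)" by (simp add: last_conv_nth)
  ultimately show ?thesis by auto
qed

lemma dpaths_single: "xs \<in> dpaths E w u \<Longrightarrow> length xs < 2 \<Longrightarrow> xs = [w] \<and> u = w"
  unfolding dpaths_def by (cases xs) auto

lemma trivial_path: "[w] \<in> dpaths E w w"
  unfolding dpaths_def by auto

lemma dpaths_nonblack: "u \<notin> Bl \<Longrightarrow> dpaths E w u = (if u = w then {[w]} else {})"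
proof -
  assume u: "u \<notin> Bl"
  have "xs \<in> dpaths E w u \<Longrightarrow> xs = [w] \<and> u = w" for xs
    using path_last_black[of xs w u] dpaths_single[of xs w u] u by linarith
  then show ?thesis using trivial_path by auto
qed

lemma reachA: "reach E w \<subseteq> insert w A"
proof
  fix u assume "u \<in> reach E w"
  then obtain xs where xs: "xs \<in> dpaths E w u" unfolding reach_def by auto
  then have "u = last xs" "xs \<noteq> []" unfolding dpaths_def by auto
  then show "u \<in> insert w A" using path_set[OF xs] last_in_set[of xs] by blast
qed

lemma fin_reach: "finite (reach E w)"
  using reachA finA finite_subset by blast

lemma w_reach: "w \<in> reach E w"
  unfolding reach_def using trivial_path by auto

lemma acoef_self: "w \<notin> Bl \<Longrightarrow> acoef E w w = 1"
  unfolding acoef_def using dpaths_nonblack[of w w] by simp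

lemma acoef_nonblack: "u \<notin> Bl \<Longrightarrow> u \<noteq> w \<Longrightarrow> acoef E w u = 0"
  unfolding acoef_def using dpaths_nonblack[of u w] by simp

lemma reach_nonblack: "u \<in> reach E w \<Longrightarrow> u \<notin> Bl \<Longrightarrow> u = w"
  unfolding reach_def using dpaths_nonblack[of u w] by (auto split: if_splits)

lemma acoef_unreach: "u \<notin> reach E w \<Longrightarrow> acoef E w u = 0"
  unfolding reach_def acoef_def by auto


lemma dpaths_black:
  assumes w: "w \<notin> Bl" and l: "l \<in> {1..L}"
  shows "dpaths E w (b l) = (\<lambda>xs. xs @ [b l]) ` (\<Union>x\<in>V l - {b l}. dpaths E w x)"
proof
  show "dpaths E w (b l) \<subseteq> (\<lambda>xs. xs @ [b l]) ` (\<Union>x\<in>V l - {b l}. dpaths E w x)"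
  proof
    fix xs assume xs: "xs \<in> dpaths E w (b l)"
    have len: "2 \<le> length xs"
    proof (rule ccontr)
      assume "\<not> 2 \<le> length xs"
      then have "b l = w" using dpaths_single[OF xs] by auto
      then show False using w l by auto
    qed
    define ys where "ys = butlast xs"
    have xd: "xs \<noteq> []" "hd xs = w" "last xs = b l"
      and ed: "\<And>i. Suc i < length xs \<Longrightarrow> (xs ! i, xs ! Suc i) \<in> E"
      using xs unfolding dpaths_def by auto
    have xs_eq: "xs = ys @ [b l]" unfolding ys_def using xd by (metis append_butlast_last_id)
    have ly: "length ys = length xs - 1" unfolding ys_def by simp
    have yne: "ys \<noteq> []" using len ly by auto
    have nthy: "i < length ys \<Longrightarrow> ys ! i = xs ! i" for i unfolding ys_def by (simp add: nth_butlast)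
    define x where "x = last ys"
    have "length xs - 2 < length ys" using len ly by auto
    then have "ys ! (length xs - 2) = xs ! (length xs - 2)" using nthy by blast
    moreover have "length ys - 1 = length xs - 2" using ly by simp
    ultimately have x_eq: "x = xs ! (length xs - 2)" using yne unfolding x_def
      by (simp add: last_conv_nth)
    have e1: "(xs ! (length xs - 2), xs ! Suc (length xs - 2)) \<in> E" using ed len by auto
    have "Suc (length xs - 2) = length xs - 1" using len by simp
    then have "xs ! Suc (length xs - 2) = b l" using xd by (simp add: last_conv_nth)
    then have "x \<in> V l - {b l}" using edge_iff[OF l] x_eq e1 by auto
    moreover have "ys \<in> dpaths E w x"
      unfolding dpaths_def mem_Collect_eq
    proof (intro conjI allI impI)
      show "ys \<noteq> []" by (rule yne)
      show "hd ys = w" using xd yne xs_eq by (metis hd_append2)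
      show "last ys = x" by (simp add: x_def)
      fix i assume i: "Suc i < length ys"
      then have "ys ! i = xs ! i" "ys ! Suc i = xs ! Suc i" using nthy by auto
      moreover have "Suc i < length xs" using i ly by auto
      ultimately show "(ys ! i, ys ! Suc i) \<in> E" using ed by simp
    qed
    ultimately show "xs \<in> (\<lambda>xs. xs @ [b l]) ` (\<Union>x\<in>V l - {b l}. dpaths E w x)"
      using xs_eq by blast
  qed
next
  show "(\<lambda>xs. xs @ [b l]) ` (\<Union>x\<in>V l - {b l}. dpaths E w x) \<subseteq> dpaths E w (b l)"
  proof
    fix zs assume "zs \<in> (\<lambda>xs. xs @ [b l]) ` (\<Union>x\<in>V l - {b l}. dpaths E w x)"
    then obtain x ys where x: "x \<in> V l" "x \<noteq> b l" and ys: "ys \<in> dpaths E w x" and zs: "zs = ys @ [b l]"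
      by auto
    have yd: "ys \<noteq> []" "hd ys = w" "last ys = x"
      and ed: "\<And>i. Suc i < length ys \<Longrightarrow> (ys ! i, ys ! Suc i) \<in> E"
      using ys unfolding dpaths_def by auto
    have "(zs ! i, zs ! Suc i) \<in> E" if i: "Suc i < length zs" for i
    proof (cases "Suc i < length ys")
      case True then show ?thesis using ed[OF True] zs by (simp add: nth_append)
    next
      case False
      then have "Suc i = length ys" using i zs by auto
      then have "i = length ys - 1" "i < length ys" by auto
      then have "zs ! i = x" "zs ! Suc i = b l" using yd zs \<open>Suc i = length ys\<close>
        by (auto simp: nth_append last_conv_nth)
      then show ?thesis using edge_iff[OF l] x by auto
    qed
    then show "zs \<in> dpaths E w (b l)" unfolding dpaths_def using yd zs by auto
  qed
qed

lemma acoef_black: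
  assumes w: "w \<notin> Bl" and l: "l \<in> {1..L}"
  shows "acoef E w (b l) = - (\<Sum>x\<in>V l - {b l}. acoef E w x)"
proof -
  have inj: "inj_on (\<lambda>xs. xs @ [b l]) X" for X by (rule inj_onI) simp
  have "acoef E w (b l) = (\<Sum>xs\<in>(\<Union>x\<in>V l - {b l}. dpaths E w x). (-1) ^ (length (xs @ [b l]) - 1))"
    unfolding acoef_def dpaths_black[OF w l] by (subst sum.reindex[OF inj]) simp
  also have "\<dots> = (\<Sum>x\<in>V l - {b l}. \<Sum>xs\<in>dpaths E w x. (-1) ^ (length (xs @ [b l]) - 1))"
    by (rule sum.UNION_disjoint) (use finV[OF l] fin_dpaths in \<open>auto simp: dpaths_def\<close>)
  also have "\<dots> = (\<Sum>x\<in>V l - {b l}. - acoef E w x)"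
  proof (rule sum.cong[OF refl])
    fix x
    have "(-1::int) ^ (length (xs @ [b l]) - 1) = - ((-1) ^ (length xs - 1))" if "xs \<in> dpaths E w x" for xs
    proof -
      from that have "xs \<noteq> []" unfolding dpaths_def by auto
      then have "length xs = Suc (length xs - 1)" by simp
      then show ?thesis by (metis diff_Suc_1 length_append_singleton mult_minus1 power_Suc)
    qed
    then show "(\<Sum>xs\<in>dpaths E w x. (-1::int) ^ (length (xs @ [b l]) - 1)) = - acoef E w x"
      unfolding acoef_def sum_negf[symmetric] by (rule sum.cong[OF refl])
  qed
  finally show ?thesis by (simp add: sum_negf)
qed

lemma acoef_sum_zero:
  assumes w: "w \<notin> Bl" and l: "l \<in> {1..L}"
  shows "(\<Sum>u\<in>V l. acoef E w u) = 0"
  using acoef_black[OF w l] sum.remove[OF finV[OF l] bV[OF l], of "acoef E w"] by simp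


definition Bop :: "nat \<Rightarrow> bool \<Rightarrow> 'v fock \<Rightarrow> 'v fock" where
  "Bop l \<sigma> \<Psi> = (\<lambda>S. \<Sum>v\<in>V l. ann (v, \<sigma>) \<Psi> S)"

lemma white_eq: "white L V b = A - Bl" unfolding white_def by simp

lemma adag_B:
  assumes w: "w \<in> white L V b" and l: "l \<in> {1..L}" and S: "finite S"
    and IH: "\<And>S'. finite S' \<Longrightarrow> Bop l True \<Psi> S' = 0"
  shows "Bop l True (adag L V b w True \<Psi>) S = 0"
proof -
  let ?R = "reach E w"
  define c where "c u = (of_int (acoef E w u) :: complex)" for u
  have wB: "w \<notin> Bl" using w white_eq by auto
  have 1: "Bop l True (adag L V b w True \<Psi>) S =
      (\<Sum>v\<in>V l. \<Sum>u\<in>?R. c u * ann (v,True) (cre (u,True) \<Psi>) S)"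
    unfolding Bop_def adag_def c_def by (simp add: ann_sum ann_scale)
  have 2: "ann (v,True) (cre (u,True) \<Psi>) S = (if v = u then \<Psi> S else 0) - cre (u,True) (ann (v,True) \<Psi>) S" for u v
    using anticomm_eq[of "(u,True)" \<Psi> S] anticomm_ne[OF S, of "(v,True)" "(u,True)" \<Psi>]
    by (cases "v = u") (auto simp: algebra_simps)
  have 3: "(\<Sum>v\<in>V l. \<Sum>u\<in>?R. c u * cre (u,True) (ann (v,True) \<Psi>) S) = 0"
  proof -
    have "(\<Sum>v\<in>V l. \<Sum>u\<in>?R. c u * cre (u,True) (ann (v,True) \<Psi>) S)
        = (\<Sum>u\<in>?R. c u * (\<Sum>v\<in>V l. cre (u,True) (ann (v,True) \<Psi>) S))"
      by (subst sum.swap) (simp add: sum_distrib_left)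
    also have "\<dots> = (\<Sum>u\<in>?R. c u * cre (u,True) (Bop l True \<Psi>) S)"
      unfolding Bop_def by (simp add: cre_sum)
    also have "\<dots> = 0"
      using IH S by (intro sum.neutral) (auto simp: cre_alt)
    finally show ?thesis .
  qed
  have 4: "(\<Sum>v\<in>V l. \<Sum>u\<in>?R. c u * (if v = u then \<Psi> S else 0)) = 0"
  proof -
    have "(\<Sum>v\<in>V l. \<Sum>u\<in>?R. c u * (if v = u then \<Psi> S else 0))
        = (\<Sum>v\<in>V l. c v * \<Psi> S)"
    proof (rule sum.cong[OF refl])
      fix v
      have "(\<Sum>u\<in>?R. c u * (if v = u then \<Psi> S else 0)) = (\<Sum>u\<in>?R. if v = u then c v * \<Psi> S else 0)"
        by (rule sum.cong) auto
      also have "\<dots> = (if v \<in> ?R then c v * \<Psi> S else 0)"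
        using fin_reach by simp
      also have "\<dots> = c v * \<Psi> S" using acoef_unreach[of v w] by (auto simp: c_def)
      finally show "(\<Sum>u\<in>?R. c u * (if v = u then \<Psi> S else 0)) = c v * \<Psi> S" .
    qed
    also have "\<dots> = of_int (\<Sum>v\<in>V l. acoef E w v) * \<Psi> S"
      by (simp add: c_def sum_distrib_right)
    also have "\<dots> = 0" using acoef_sum_zero[OF wB l] by simp
    finally show ?thesis .
  qed
  have "Bop l True (adag L V b w True \<Psi>) S =
      (\<Sum>v\<in>V l. \<Sum>u\<in>?R. c u * (if v = u then \<Psi> S else 0)) -
      (\<Sum>v\<in>V l. \<Sum>u\<in>?R. c u * cre (u,True) (ann (v,True) \<Psi>) S)"
    unfolding 1 2 by (simp add: right_diff_distrib sum_subtractf)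
  then show ?thesis using 3 4 by simp
qed

definition Pw :: "'v list \<Rightarrow> 'v fock" where
  "Pw ws = foldr (\<lambda>v \<Psi>. adag L V b v True \<Psi>) ws vac"

lemma Pw_Cons: "Pw (w # ws) = adag L V b w True (Pw ws)" unfolding Pw_def by simp

lemma Pw_supp: "set ws \<subseteq> white L V b \<Longrightarrow> Pw ws S \<noteq> 0 \<Longrightarrow> finite S \<and> S \<subseteq> A \<times> {True} \<and> card S = length ws"
proof (induction ws arbitrary: S)
  case Nil
  then show ?case by (simp add: Pw_def vac_def split: if_splits)
next
  case (Cons w ws)
  have "(\<Sum>u\<in>reach E w. cnj (of_int (acoef E w u)) * cre (u, True) (Pw ws) S) \<noteq> 0"
    using Cons.prems(2) by (simp add: Pw_Cons adag_def)
  then obtain u where u: "u \<in> reach E w" "cre (u, True) (Pw ws) S \<noteq> 0"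
    by (metis (no_types, lifting) mult_zero_right sum.neutral)
  then have uS: "(u,True) \<in> S" and P: "Pw ws (S - {(u,True)}) \<noteq> 0" by (auto simp: cre_alt split: if_splits)
  have IH: "finite (S - {(u,True)}) \<and> S - {(u,True)} \<subseteq> A \<times> {True} \<and> card (S - {(u,True)}) = length ws"
    using Cons.IH[OF _ P] Cons.prems(1) by auto
  have "w \<in> A" using Cons.prems(1) white_eq by auto
  then have "u \<in> A" using u(1) reachA by auto
  then have "S \<subseteq> A \<times> {True}" using IH uS by auto
  moreover have "finite S" using IH by simp
  moreover have "card S = Suc (length ws)"
    using IH uS \<open>finite S\<close> by (metis card_Suc_Diff1)
  ultimately show ?case by simp
qed

lemma Pw_B_fin: "set ws \<subseteq> white L V b \<Longrightarrow> l \<in> {1..L} \<Longrightarrow> finite S \<Longrightarrow> Bop l True (Pw ws) S = 0"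
proof (induction ws arbitrary: S)
  case Nil
  have "ann (v, True) vac S = 0" for v by (simp add: ann_alt vac_def)
  then show ?case by (simp add: Pw_def Bop_def)
next
  case (Cons w ws)
  show ?case unfolding Pw_Cons
    by (rule adag_B) (use Cons in auto)
qed

lemma Pw_B: assumes "set ws \<subseteq> white L V b" "l \<in> {1..L}" shows "Bop l \<sigma> (Pw ws) = (\<lambda>_. 0)"
proof
  fix S
  show "Bop l \<sigma> (Pw ws) S = 0"
  proof (cases "\<sigma> \<and> finite S")
    case True then show ?thesis using Pw_B_fin[OF assms] by auto
  next
    case False
    have "ann (v, \<sigma>) (Pw ws) S = 0" for v
    proof -
      have "Pw ws (insert (v,\<sigma>) S) = 0"
        using Pw_supp[OF assms(1), of "insert (v,\<sigma>) S"] False by auto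
      then show ?thesis by (simp add: ann_alt)
    qed
    then show ?thesis by (simp add: Bop_def)
  qed
qed

lemma adag_white:
  assumes w: "w \<in> white L V b" and S: "S \<subseteq> white L V b \<times> {True}"
  shows "adag L V b w True \<Psi> S = cre (w, True) \<Psi> S"
proof -
  have wB: "w \<notin> Bl" using w white_eq by auto
  have "adag L V b w True \<Psi> S = (\<Sum>u\<in>reach E w. of_int (acoef E w u) * cre (u, True) \<Psi> S)"
    by (simp add: adag_def)
  also have "\<dots> = of_int (acoef E w w) * cre (w, True) \<Psi> S +
      (\<Sum>u\<in>reach E w - {w}. of_int (acoef E w u) * cre (u, True) \<Psi> S)"
    using sum.remove[OF fin_reach w_reach] by blast
  also have "(\<Sum>u\<in>reach E w - {w}. of_int (acoef E w u) * cre (u, True) \<Psi> S) = 0"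
  proof (rule sum.neutral, rule ballI)
    fix u assume u: "u \<in> reach E w - {w}"
    have "(u, True) \<notin> S"
    proof
      assume "(u, True) \<in> S"
      then have "u \<notin> Bl" using S white_eq by auto
      then show False using reach_nonblack u by auto
    qed
    then show "of_int (acoef E w u) * cre (u, True) \<Psi> S = 0" by (simp add: cre_alt)
  qed
  finally show ?thesis using acoef_self[OF wB] by simp
qed

lemma Pw_val: "distinct ws \<Longrightarrow> set ws \<subseteq> white L V b \<Longrightarrow> Pw ws ((\<lambda>v. (v,True)) ` set ws) \<noteq> 0"
proof (induction ws)
  case Nil
  then show ?case by (simp add: Pw_def vac_def)
next
  case (Cons w ws)
  let ?S = "(\<lambda>v. (v,True)) ` set (w # ws)"
  have "Pw (w # ws) ?S = cre (w, True) (Pw ws) ?S"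
    unfolding Pw_Cons by (rule adag_white) (use Cons.prems in auto)
  moreover have "?S - {(w,True)} = (\<lambda>v. (v,True)) ` set ws" using Cons.prems by auto
  moreover have "(w,True) \<in> ?S" by simp
  moreover have "Pw ws ((\<lambda>v. (v,True)) ` set ws) \<noteq> 0" using Cons by simp
  ultimately show ?case unfolding cre_alt by simp
qed

lemma swap4: "(\<Sum>l\<in>I. \<Sum>\<sigma>\<in>J. \<Sum>v\<in>K. \<Sum>v'\<in>M. f l \<sigma> v v') = (\<Sum>v\<in>K. \<Sum>v'\<in>M. \<Sum>\<sigma>\<in>J. \<Sum>l\<in>I. f l \<sigma> v v')"
proof -
  have "(\<Sum>l\<in>I. \<Sum>\<sigma>\<in>J. \<Sum>v\<in>K. \<Sum>v'\<in>M. f l \<sigma> v v') = (\<Sum>l\<in>I. \<Sum>v\<in>K. \<Sum>\<sigma>\<in>J. \<Sum>v'\<in>M. f l \<sigma> v v')"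
    by (rule sum.cong[OF refl], rule sum.swap)
  also have "\<dots> = (\<Sum>l\<in>I. \<Sum>v\<in>K. \<Sum>v'\<in>M. \<Sum>\<sigma>\<in>J. f l \<sigma> v v')"
    by (rule sum.cong[OF refl], rule sum.cong[OF refl], rule sum.swap)
  also have "\<dots> = (\<Sum>v\<in>K. \<Sum>l\<in>I. \<Sum>v'\<in>M. \<Sum>\<sigma>\<in>J. f l \<sigma> v v')"
    by (rule sum.swap)
  also have "\<dots> = (\<Sum>v\<in>K. \<Sum>v'\<in>M. \<Sum>l\<in>I. \<Sum>\<sigma>\<in>J. f l \<sigma> v v')"
    by (rule sum.cong[OF refl], rule sum.swap)
  also have "\<dots> = (\<Sum>v\<in>K. \<Sum>v'\<in>M. \<Sum>\<sigma>\<in>J. \<Sum>l\<in>I. f l \<sigma> v v')"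
    by (rule sum.cong[OF refl], rule sum.cong[OF refl], rule sum.swap)
  finally show ?thesis .
qed

lemma hop_eq: "hop L V t v v' = t * (\<Sum>l\<in>{1..L}. if v \<in> V l \<and> v' \<in> V l then 1 else 0)"
proof -
  have c: "real (card {l\<in>{1..L}. P l}) = (\<Sum>l\<in>{1..L}. if P l then 1 else 0)" for P
  proof -
    have "{l\<in>{1..L}. P l} = {1..L} \<inter> Collect P" by auto
    then show ?thesis by (simp add: sum.If_cases)
  qed
  show ?thesis
  proof (cases "v = v'")
    case True then show ?thesis unfolding hop_def vweight_def using c[of "\<lambda>l. v \<in> V l"] by (simp add: mult.commute)
  next
    case False
    have e: "{l\<in>{1..L}. {v, v'} \<subseteq> V l} = {l\<in>{1..L}. v \<in> V l \<and> v' \<in> V l}" by auto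
    show ?thesis
    proof (cases "is_edge L V v v'")
      case True then show ?thesis using False c[of "\<lambda>l. v \<in> V l \<and> v' \<in> V l"]
        unfolding hop_def eweight_def e by (simp add: mult.commute)
    next
      case ne: False
      then have "\<forall>l\<in>{1..L}. \<not> (v \<in> V l \<and> v' \<in> V l)" using False by (auto simp: is_edge_def)
      then have "(\<Sum>l\<in>{1..L}. if v \<in> V l \<and> v' \<in> V l then 1 else (0::real)) = 0"
        by (intro sum.neutral) auto
      then show ?thesis using False ne by (simp add: hop_def)
    qed
  qed
qed

lemma restr: "l \<in> {1..L} \<Longrightarrow> (\<Sum>v\<in>V l. f v) = (\<Sum>v\<in>A. if v \<in> V l then f v else 0)"
  using sum.inter_restrict[OF finA, of f "V l"] VA[of l] by (simp add: Int_absorb1)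

lemma H_hop_decomp:
  "H_hop L V t \<Psi> S = of_real t * (\<Sum>l\<in>{1..L}. \<Sum>\<sigma>\<in>UNIV. \<Sum>v\<in>V l. cre (v,\<sigma>) (Bop l \<sigma> \<Psi>) S)"
proof -
  define X where "X v v' \<sigma> = cre (v,\<sigma>) (ann (v',\<sigma>) \<Psi>) S" for v v' \<sigma>
  have "(\<Sum>l\<in>{1..L}. \<Sum>\<sigma>\<in>UNIV. \<Sum>v\<in>V l. cre (v,\<sigma>) (Bop l \<sigma> \<Psi>) S)
      = (\<Sum>l\<in>{1..L}. \<Sum>\<sigma>\<in>(UNIV::bool set). \<Sum>v\<in>A. \<Sum>v'\<in>A. if v \<in> V l \<and> v' \<in> V l then X v v' \<sigma> else 0)"
  proof (intro sum.cong[OF refl])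
    fix l \<sigma> assume l: "l \<in> {1..L}"
    have "(\<Sum>v\<in>V l. cre (v,\<sigma>) (Bop l \<sigma> \<Psi>) S) = (\<Sum>v\<in>V l. \<Sum>v'\<in>V l. X v v' \<sigma>)"
      unfolding Bop_def X_def by (simp add: cre_sum)
    also have "\<dots> = (\<Sum>v\<in>A. if v \<in> V l then \<Sum>v'\<in>A. if v' \<in> V l then X v v' \<sigma> else 0 else 0)"
      by (simp only: restr[OF l])
    also have "\<dots> = (\<Sum>v\<in>A. \<Sum>v'\<in>A. if v \<in> V l \<and> v' \<in> V l then X v v' \<sigma> else 0)"
      by (rule sum.cong[OF refl]) (auto intro: sum.neutral)
    finally show "(\<Sum>v\<in>V l. cre (v,\<sigma>) (Bop l \<sigma> \<Psi>) S) = (\<Sum>v\<in>A. \<Sum>v'\<in>A. if v \<in> V l \<and> v' \<in> V l then X v v' \<sigma> else 0)" .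
  qed
  also have "\<dots> = (\<Sum>v\<in>A. \<Sum>v'\<in>A. \<Sum>\<sigma>\<in>(UNIV::bool set). \<Sum>l\<in>{1..L}. if v \<in> V l \<and> v' \<in> V l then X v v' \<sigma> else 0)"
    by (rule swap4)
  finally have 1: "of_real t * (\<Sum>l\<in>{1..L}. \<Sum>\<sigma>\<in>UNIV. \<Sum>v\<in>V l. cre (v,\<sigma>) (Bop l \<sigma> \<Psi>) S) =
     (\<Sum>v\<in>A. \<Sum>v'\<in>A. \<Sum>\<sigma>\<in>(UNIV::bool set). of_real t * (\<Sum>l\<in>{1..L}. if v \<in> V l \<and> v' \<in> V l then X v v' \<sigma> else 0))"
    by (simp add: sum_distrib_left)
  have 2: "of_real t * (\<Sum>l\<in>{1..L}. if v \<in> V l \<and> v' \<in> V l then X v v' \<sigma> else 0)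
      = of_real (hop L V t v v') * X v v' \<sigma>" for v v' \<sigma>
    unfolding hop_eq by (simp add: sum_distrib_right sum.If_cases)
  have 3: "of_real t * (\<Sum>l\<in>{1..L}. \<Sum>\<sigma>\<in>UNIV. \<Sum>v\<in>V l. cre (v,\<sigma>) (Bop l \<sigma> \<Psi>) S) =
     (\<Sum>v\<in>A. \<Sum>v'\<in>A. \<Sum>\<sigma>\<in>(UNIV::bool set). of_real (hop L V t v v') * X v v' \<sigma>)"
    unfolding 1 2 ..
  show ?thesis unfolding 3 H_hop_def X_def ..
qed

lemma H_int_eq: "H_int L V U \<Psi> S = of_real U * (\<Sum>v\<in>A. if (v,True) \<in> S \<and> (v,False) \<in> S then \<Psi> S else 0)"
proof -
  have "num (v,True) (num (v,False) \<Psi>) S = (if (v,True) \<in> S \<and> (v,False) \<in> S then \<Psi> S else 0)" for v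
    using num_eq[of "(v,True)" "num (v,False) \<Psi>" S] num_eq[of "(v,False)" \<Psi> S] by simp
  then show ?thesis unfolding H_int_def by (simp add: sum_distrib_left)
qed


abbreviation "M \<equiv> A \<times> (UNIV :: bool set)"

lemma finM: "finite M" using finA by simp

lemma piece:
  assumes l: "l \<in> {1..L}"
  shows "(\<Sum>S\<in>Pow M. cnj (\<Psi> S) * (\<Sum>v\<in>V l. cre (v,\<sigma>) (Bop l \<sigma> \<Psi>) S))
       = of_real (\<Sum>S\<in>Pow M. (cmod (Bop l \<sigma> \<Psi> S))^2)"
proof -
  have "(\<Sum>S\<in>Pow M. cnj (\<Psi> S) * (\<Sum>v\<in>V l. cre (v,\<sigma>) (Bop l \<sigma> \<Psi>) S))
      = (\<Sum>S\<in>Pow M. \<Sum>v\<in>V l. cnj (\<Psi> S) * cre (v,\<sigma>) (Bop l \<sigma> \<Psi>) S)"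
    by (simp add: sum_distrib_left)
  also have "\<dots> = (\<Sum>v\<in>V l. \<Sum>S\<in>Pow M. cnj (\<Psi> S) * cre (v,\<sigma>) (Bop l \<sigma> \<Psi>) S)"
    by (rule sum.swap)
  also have "\<dots> = (\<Sum>v\<in>V l. \<Sum>S\<in>Pow M. cnj (ann (v,\<sigma>) \<Psi> S) * Bop l \<sigma> \<Psi> S)"
  proof (rule sum.cong[OF refl])
    fix v assume "v \<in> V l"
    then have "(v,\<sigma>) \<in> M" using VA[OF l] by auto
    then show "(\<Sum>S\<in>Pow M. cnj (\<Psi> S) * cre (v,\<sigma>) (Bop l \<sigma> \<Psi>) S) = (\<Sum>S\<in>Pow M. cnj (ann (v,\<sigma>) \<Psi> S) * Bop l \<sigma> \<Psi> S)"
      by (rule adjoint[OF finM])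
  qed
  also have "\<dots> = (\<Sum>S\<in>Pow M. \<Sum>v\<in>V l. cnj (ann (v,\<sigma>) \<Psi> S) * Bop l \<sigma> \<Psi> S)"
    by (rule sum.swap)
  also have "\<dots> = (\<Sum>S\<in>Pow M. cnj (Bop l \<sigma> \<Psi> S) * Bop l \<sigma> \<Psi> S)"
    by (rule sum.cong[OF refl]) (simp add: Bop_def sum_distrib_right)
  also have "\<dots> = (\<Sum>S\<in>Pow M. of_real ((cmod (Bop l \<sigma> \<Psi> S))^2))"
    by (rule sum.cong[OF refl]) (rule cnj_sq)
  also have "\<dots> = of_real (\<Sum>S\<in>Pow M. (cmod (Bop l \<sigma> \<Psi> S))^2)"
    by simp
  finally show ?thesis .
qed

lemma hop_energy:
  "(\<Sum>S\<in>Pow M. cnj (\<Psi> S) * H_hop L V t \<Psi> S)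
    = of_real (t * (\<Sum>l\<in>{1..L}. \<Sum>\<sigma>\<in>(UNIV::bool set). \<Sum>S\<in>Pow M. (cmod (Bop l \<sigma> \<Psi> S))^2))"
proof -
  have "(\<Sum>S\<in>Pow M. cnj (\<Psi> S) * H_hop L V t \<Psi> S)
     = of_real t * (\<Sum>S\<in>Pow M. \<Sum>l\<in>{1..L}. \<Sum>\<sigma>\<in>(UNIV::bool set). cnj (\<Psi> S) * (\<Sum>v\<in>V l. cre (v,\<sigma>) (Bop l \<sigma> \<Psi>) S))"
    unfolding H_hop_decomp by (simp add: sum_distrib_left mult_ac)
  also have "(\<Sum>S\<in>Pow M. \<Sum>l\<in>{1..L}. \<Sum>\<sigma>\<in>(UNIV::bool set). cnj (\<Psi> S) * (\<Sum>v\<in>V l. cre (v,\<sigma>) (Bop l \<sigma> \<Psi>) S))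
     = (\<Sum>l\<in>{1..L}. \<Sum>\<sigma>\<in>(UNIV::bool set). \<Sum>S\<in>Pow M. cnj (\<Psi> S) * (\<Sum>v\<in>V l. cre (v,\<sigma>) (Bop l \<sigma> \<Psi>) S))"
    by (subst sum.swap, rule sum.cong[OF refl], rule sum.swap)
  also have "\<dots> = (\<Sum>l\<in>{1..L}. \<Sum>\<sigma>\<in>(UNIV::bool set). of_real (\<Sum>S\<in>Pow M. (cmod (Bop l \<sigma> \<Psi> S))^2))"
    by (intro sum.cong[OF refl] piece) 
  finally show ?thesis by simp
qed

lemma int_energy:
  "(\<Sum>S\<in>Pow M. cnj (\<Psi> S) * H_int L V U \<Psi> S)
    = of_real (U * (\<Sum>S\<in>Pow M. \<Sum>v\<in>A. if (v,True) \<in> S \<and> (v,False) \<in> S then (cmod (\<Psi> S))^2 else 0))"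
proof -
  have "cnj (\<Psi> S) * (if c then \<Psi> S else 0) = of_real (if c then (cmod (\<Psi> S))^2 else 0)" for S c
    by (cases c) (simp_all only: if_True if_False cnj_sq mult_zero_right of_real_0)
  then show ?thesis unfolding H_int_eq by (simp add: sum_distrib_left mult_ac)
qed

end

theorem proposition2:
  fixes L :: nat and V :: "nat \<Rightarrow> 'v::linorder set" and b :: "nat \<Rightarrow> 'v"
    and t U :: real
  assumes "graph_construction L V b" and "t > 0" and "U > 0"
  shows "in_sector L V (card (allV L V) - L) (Phi_up L V b)
    \<and> Phi_up L V b \<noteq> (\<lambda>_. 0)
    \<and> Ham L V t U (Phi_up L V b) = (\<lambda>S. of_real 0 * Phi_up L V b S)
    \<and> (\<forall>(E::real) \<Psi>. in_sector L V (card (allV L V) - L) \<Psi> \<and> \<Psi> \<noteq> (\<lambda>_. 0)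
         \<and> Ham L V t U \<Psi> = (\<lambda>S. of_real E * \<Psi> S) \<longrightarrow> 0 \<le> E)"
proof -
  interpret gc L V b by (rule gc.intro) (rule assms(1))
  define ws where "ws = sorted_list_of_set (white L V b)"
  have finW: "finite (white L V b)" using finA white_eq by simp
  have setws: "set ws = white L V b" and dws: "distinct ws" using finW by (auto simp: ws_def)
  have wsub: "set ws \<subseteq> white L V b" using setws by simp
  have Phi: "Phi_up L V b = Pw ws" unfolding Phi_up_def Pw_def ws_def ..
  have "card Bl = L" using card_image[OF b_inj] by simp
  then have lenws: "length ws = card A - L"
    using distinct_card[OF dws] setws white_eq card_Diff_subset[OF finite_subset[OF BlA finA] BlA] by simp
  have sec: "in_sector L V (card A - L) (Phi_up L V b)"
    unfolding in_sector_def Phi using Pw_supp[OF wsub] lenws by fastforce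
  have nz: "Phi_up L V b \<noteq> (\<lambda>_. 0)"
    unfolding Phi using Pw_val[OF dws wsub] by (metis)
  have hop0: "H_hop L V t (Pw ws) S = 0" for S
  proof -
    have "(\<Sum>l\<in>{1..L}. \<Sum>\<sigma>\<in>UNIV. \<Sum>v\<in>V l. cre (v,\<sigma>) (Bop l \<sigma> (Pw ws)) S) = 0"
      by (intro sum.neutral ballI) (simp add: Pw_B[OF wsub] cre_zero)
    then show ?thesis unfolding H_hop_decomp by simp
  qed
  have int0: "H_int L V U (Pw ws) S = 0" for S
  proof -
    have "(if (v,True) \<in> S \<and> (v,False) \<in> S then Pw ws S else 0) = 0" for v
      using Pw_supp[OF wsub, of S] by auto
    then show ?thesis unfolding H_int_eq by simp
  qed
  have ham0: "Ham L V t U (Phi_up L V b) = (\<lambda>S. of_real 0 * Phi_up L V b S)"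
    unfolding Ham_def Phi using hop0 int0 by simp
  have ground: "0 \<le> E" if sE: "in_sector L V (card A - L) \<Psi>" and nE: "\<Psi> \<noteq> (\<lambda>_. 0)"
      and hE: "Ham L V t U \<Psi> = (\<lambda>S. of_real E * \<Psi> S)" for E \<Psi>
  proof -
    have eq: "H_hop L V t \<Psi> S + H_int L V U \<Psi> S = of_real E * \<Psi> S" for S
      using hE unfolding Ham_def by (metis)
    define h where "h = t * (\<Sum>l\<in>{1..L}. \<Sum>\<sigma>\<in>(UNIV::bool set). \<Sum>S\<in>Pow M. (cmod (Bop l \<sigma> \<Psi> S))^2)"
    define i where "i = U * (\<Sum>S\<in>Pow M. \<Sum>v\<in>A. if (v,True) \<in> S \<and> (v,False) \<in> S then (cmod (\<Psi> S))^2 else 0)"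
    define N where "N = (\<Sum>S\<in>Pow M. (cmod (\<Psi> S))^2)"
    have h0: "0 \<le> h" unfolding h_def using assms(2) by (intro mult_nonneg_nonneg sum_nonneg) auto
    have i0: "0 \<le> i" unfolding i_def using assms(3) by (intro mult_nonneg_nonneg sum_nonneg) auto
    obtain S0 where S0: "\<Psi> S0 \<noteq> 0" using nE by auto
    then have "S0 \<in> Pow M" using sE unfolding in_sector_def by auto
    then have N0: "0 < N" unfolding N_def
      by (intro sum_pos2[of _ S0]) (use finM S0 in auto)
    have "of_real (h + i) = (\<Sum>S\<in>Pow M. cnj (\<Psi> S) * (H_hop L V t \<Psi> S + H_int L V U \<Psi> S))"
      unfolding h_def i_def of_real_add hop_energy[symmetric] int_energy[symmetric]
      by (simp add: distrib_left sum.distrib)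
    also have "\<dots> = (\<Sum>S\<in>Pow M. of_real E * (cnj (\<Psi> S) * \<Psi> S))"
      unfolding eq by (simp add: mult_ac)
    also have "\<dots> = of_real (E * N)"
      unfolding N_def cnj_sq by (simp add: sum_distrib_left)
    finally have "h + i = E * N" by (simp only: of_real_eq_iff)
    then have "0 \<le> E * N" using h0 i0 by simp
    then show ?thesis using N0 by (simp add: zero_le_mult_iff)
  qed
  show ?thesis using sec nz ham0 ground by blast
qed

end
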